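(* In a hierarchical tensor factorization with mode tree $\mathcal T$, for any $\nu\in\mathrm{int}(\mathcal T)$, $\nu_c\in C(\nu)$ and $r\in[R_\nu]$: (a) the end tensor obtained by replacing $W^{(\nu)}$ with the matrix whose $r$'th row is $W^{(\nu)}_{r,:}$ and whose other rows are zero (all other weight matrices unchanged) equals $\sigma_{\nu,r}\cdot\mathcal E_{\nu,r}$; and (b) the end tensor obtained by replacing $W^{(\nu_c)}$ with the matrix whose $r$'th column is $W^{(\nu_c)}_{:,r}$ and whose other columns are zero (all other weight matrices unchanged) equals $\sigma_{\nu,r}\cdot\mathcal E_{\nu,r}$.
   Context: Fix $N\in\mathbb N$, $D_1,\dots,D_N\in\mathbb N$; $[K]:=\{1,\dots,K\}$; norms are Frobenius norms; $\otimes$ the tensor product. A mode tree $\mathcal T$ over $[N]$ is a rooted tree whose nodes are labeled by subsets of $[N]$, with exactly $N$ leaves labeled $\{1\},\dots,\{N\}$, and where each interior node's label is the union of its children's labels; nodes are identified with labels, root $[N]$, $\mathrm{int}(\mathcal T)$ interior nodes, $Pa(\nu)$ parent, $C(\nu)$ children (fixed order). A hierarchical tensor factorization has $R_\nu\in\mathbb N$ ($\nu\in\mathrm{int}(\mathcal T)$), $R_{Pa([N])}:=1$, $R_{\{n\}}:=D_n$, weight matrices $W^{(\nu)}\in\mathbb R^{R_\nu\times R_{Pa(\nu)}}$. Intermediate tensors: $\mathcal W^{(\{n\},r)}:=W^{(\{n\})}_{:,r}$; for $\nu\in\mathrm{int}(\mathcal T)\setminus\{[N]\}$ (leaves to root),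 $r\in[R_{Pa(\nu)}]$: $\mathcal W^{(\nu,r)}:=\pi_\nu\big(\sum_{r'=1}^{R_\nu}W^{(\nu)}_{r',r}\bigotimes_{\nu_c\in C(\nu)}\mathcal W^{(\nu_c,r')}\big)$; end tensor $\mathcal W_H:=\pi_{[N]}\big(\sum_{r'=1}^{R_{[N]}}W^{([N])}_{r',1}\bigotimes_{\nu_c\in C([N])}\mathcal W^{(\nu_c,r')}\big)$, where $\pi_\nu$ permutes modes (ordered by children, each child's elements ascending) into ascending order of the elements of $\nu$. The norm of the $(\nu,r)$'th local component is $\sigma_{\nu,r}:=\|W^{(\nu)}_{r,:}\|\prod_{\nu_c\in C(\nu)}\|W^{(\nu_c)}_{:,r}\|$. $\mathcal E_{\nu,r}$ is the end tensor obtained from the same construction except that, for every $r'\in[R_{Pa(\nu)}]$, the tensor produced at node $\nu$ (the end tensor itself if $\nu=[N]$) is replaced by $\pi_\nu\big(\sigma_{\nu,r}^{-1}W^{(\nu)}_{r,r'}\bigotimes_{\nu_c\in C(\nu)}\mathcal W^{(\nu_c,r)}\big)$; $\mathcal E_{\nu,r}:=0$ if $\sigma_{\nu,r}=0$. *)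

theory Defs
  imports Complex_Main
begin

datatype mtree = Leaf nat | Node "mtree list"

fun lab :: "mtree \<Rightarrow> nat set" where
  "lab (Leaf n) = {n}"
| "lab (Node cs) = (\<Union>c\<in>set cs. lab c)"

fun subtrees :: "mtree \<Rightarrow> mtree set" where
  "subtrees (Leaf n) = {Leaf n}"
| "subtrees (Node cs) = insert (Node cs) (\<Union>c\<in>set cs. subtrees c)"

fun leaves :: "mtree \<Rightarrow> nat list" where
  "leaves (Leaf n) = [n]"
| "leaves (Node cs) = concat (map leaves cs)"

fun labels :: "mtree \<Rightarrow> nat set list" where
  "labels (Leaf n) = [{n}]"
| "labels (Node cs) = lab (Node cs) # concat (map labels cs)"

text \<open>A mode tree over [N]: leaves are exactly the modes 1..N, every node has
  a distinct label (so nodes can be identified with labels), and every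
  interior node has at least one child.\<close>
definition mode_tree :: "nat \<Rightarrow> mtree \<Rightarrow> bool" where
  "mode_tree N T \<longleftrightarrow> set (leaves T) = {1..N} \<and> distinct (labels T)
     \<and> (\<forall>cs. Node cs \<in> subtrees T \<longrightarrow> cs \<noteq> [])"

definition interior :: "mtree \<Rightarrow> nat set set" where
  "interior T = {lab (Node cs) | cs. Node cs \<in> subtrees T}"

definition kids :: "mtree \<Rightarrow> nat set \<Rightarrow> mtree list" where
  "kids T \<nu> = (THE cs. Node cs \<in> subtrees T \<and> lab (Node cs) = \<nu>)"

fun rank :: "(nat \<Rightarrow> nat) \<Rightarrow> (nat set \<Rightarrow> nat) \<Rightarrow> mtree \<Rightarrow> nat" where
  "rank D R (Leaf n) = D n"
| "rank D R (Node cs) = R (lab (Node cs))"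

definition parent_rank :: "(nat set \<Rightarrow> nat) \<Rightarrow> mtree \<Rightarrow> nat set \<Rightarrow> nat" where
  "parent_rank R T \<nu> = (if \<nu> = lab T then 1 else
     R (lab (THE p. p \<in> subtrees T \<and> (\<exists>cs. p = Node cs \<and> (\<exists>c\<in>set cs. lab c = \<nu>)))))"

text \<open>Weight matrices: W nu i j is the (i,j) entry of W^(nu) (0-based indices,
  so [K] is rendered as {0..<K}).  Tensors are functions from multi-indices
  (nat => nat, mode n |-> index in mode n) to reals; modes are addressed by
  their labels, so the permutations pi_nu are implicit.\<close>

fun tens :: "(nat set \<Rightarrow> nat) \<Rightarrow> (nat set \<Rightarrow> nat \<Rightarrow> nat \<Rightarrow> real) \<Rightarrow> mtree
              \<Rightarrow> nat \<Rightarrow> (nat \<Rightarrow> nat) \<Rightarrow> real" where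
  "tens R W (Leaf n) r idx = W {n} (idx n) r"
| "tens R W (Node cs) r idx =
     (\<Sum>r'<R (lab (Node cs)). W (lab (Node cs)) r' r * prod_list (map (\<lambda>c. tens R W c r' idx) cs))"

fun tens_rep :: "(nat set \<Rightarrow> nat) \<Rightarrow> (nat set \<Rightarrow> nat \<Rightarrow> nat \<Rightarrow> real) \<Rightarrow> nat set
              \<Rightarrow> (nat \<Rightarrow> (nat \<Rightarrow> nat) \<Rightarrow> real) \<Rightarrow> mtree
              \<Rightarrow> nat \<Rightarrow> (nat \<Rightarrow> nat) \<Rightarrow> real" where
  "tens_rep R W \<nu> g (Leaf n) r idx = W {n} (idx n) r"
| "tens_rep R W \<nu> g (Node cs) r idx =
     (if lab (Node cs) = \<nu> then g r idx else
     (\<Sum>r'<R (lab (Node cs)). W (lab (Node cs)) r' r * prod_list (map (\<lambda>c. tens_rep R W \<nu> g c r' idx) cs)))"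

definition end_tensor :: "mtree \<Rightarrow> (nat set \<Rightarrow> nat) \<Rightarrow> (nat set \<Rightarrow> nat \<Rightarrow> nat \<Rightarrow> real)
                          \<Rightarrow> (nat \<Rightarrow> nat) \<Rightarrow> real" where
  "end_tensor T R W = tens R W T 0"

definition sigma :: "mtree \<Rightarrow> (nat \<Rightarrow> nat) \<Rightarrow> (nat set \<Rightarrow> nat) \<Rightarrow> (nat set \<Rightarrow> nat \<Rightarrow> nat \<Rightarrow> real)
                     \<Rightarrow> nat set \<Rightarrow> nat \<Rightarrow> real" where
  "sigma T D R W \<nu> r =
     sqrt (\<Sum>r'<parent_rank R T \<nu>. (W \<nu> r r')\<^sup>2) *
     prod_list (map (\<lambda>c. sqrt (\<Sum>i<rank D R c. (W (lab c) i r)\<^sup>2)) (kids T \<nu>))"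

definition local_comp :: "mtree \<Rightarrow> (nat \<Rightarrow> nat) \<Rightarrow> (nat set \<Rightarrow> nat) \<Rightarrow> (nat set \<Rightarrow> nat \<Rightarrow> nat \<Rightarrow> real)
                     \<Rightarrow> nat set \<Rightarrow> nat \<Rightarrow> (nat \<Rightarrow> nat) \<Rightarrow> real" where
  "local_comp T D R W \<nu> r =
     (if sigma T D R W \<nu> r = 0 then (\<lambda>idx. 0)
      else tens_rep R W \<nu>
             (\<lambda>r' idx. (1 / sigma T D R W \<nu> r) * W \<nu> r r' *
                prod_list (map (\<lambda>c. tens R W c r idx) (kids T \<nu>)))
             T 0)"

end

theory Submission
  imports Defs
begin

lemma sub_refl: "t \<in> subtrees t" by (cases t) auto

lemma sub_trans: "s \<in> subtrees t \<Longrightarrow> u \<in> subtrees s \<Longrightarrow> u \<in> subtrees t"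
  by (induction t arbitrary: s) auto

lemma child_size: "c \<in> set cs \<Longrightarrow> size c < size (Node cs)"
  by (induction cs) auto

lemma sub_size: "s \<in> subtrees t \<Longrightarrow> size s \<le> size t"
proof (induction t arbitrary: s)
  case (Node cs)
  then show ?case using child_size by fastforce
qed auto

lemma child_sub: "c \<in> set cs \<Longrightarrow> Node cs \<in> subtrees t \<Longrightarrow> c \<in> subtrees t"
proof -
  assume a: "c \<in> set cs" "Node cs \<in> subtrees t"
  have "c \<in> subtrees (Node cs)" using a(1) sub_refl by auto
  then show ?thesis by (rule sub_trans[OF a(2)])
qed

lemma labels_sub: "s \<in> subtrees t \<Longrightarrow> set (labels s) \<subseteq> set (labels t)"
  by (induction t arbitrary: s) (auto simp del: lab.simps(2))

lemma lab_hd: "lab t \<in> set (labels t)" by (cases t) auto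

lemma lab_in_labels: "s \<in> subtrees t \<Longrightarrow> lab s \<in> set (labels t)"
  using labels_sub lab_hd by blast

lemma distinct_sub: "distinct (labels t) \<Longrightarrow> s \<in> subtrees t \<Longrightarrow> distinct (labels s)"
  by (induction t arbitrary: s) (auto simp: distinct_concat_iff)

lemma disj: "distinct (concat (map labels cs)) \<Longrightarrow> c1 \<in> set cs \<Longrightarrow> c2 \<in> set cs \<Longrightarrow> c1 \<noteq> c2
   \<Longrightarrow> set (labels c1) \<inter> set (labels c2) = {}"
  by (induction cs) auto

lemma uniq: "distinct (labels t) \<Longrightarrow> s1 \<in> subtrees t \<Longrightarrow> s2 \<in> subtrees t \<Longrightarrow> lab s1 = lab s2 \<Longrightarrow> s1 = s2"
proof (induction t arbitrary: s1 s2)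
  case (Leaf n) then show ?case by auto
next
  case (Node cs)
  have d: "distinct (concat (map labels cs))" and hd: "lab (Node cs) \<notin> set (concat (map labels cs))"
    using Node.prems(1) by auto
  show ?case
  proof (cases "s1 = Node cs")
    case True
    show ?thesis
    proof (rule ccontr)
      assume "s1 \<noteq> s2"
      then obtain c where "c \<in> set cs" "s2 \<in> subtrees c" using Node.prems True by auto
      then show False using lab_in_labels[of s2 c] hd Node.prems True by auto
    qed
  next
    case False
    then obtain c1 where c1: "c1 \<in> set cs" "s1 \<in> subtrees c1" using Node.prems by auto
    show ?thesis
    proof (cases "s2 = Node cs")
      case True
      then show ?thesis using lab_in_labels[of s1 c1] hd Node.prems c1 by auto
    next
      case False
      then obtain c2 where c2: "c2 \<in> set cs" "s2 \<in> subtrees c2" using Node.prems by auto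
      show ?thesis
      proof (cases "c1 = c2")
        case True
        then show ?thesis using Node.IH[OF c1(1) _ c1(2)] c2 d Node.prems(4)
          by (auto simp: distinct_concat_iff)
      next
        case False
        then show ?thesis using disj[OF d c1(1) c2(1)] lab_in_labels[OF c1(2)] lab_in_labels[OF c2(2)]
          Node.prems(4) by auto
      qed
    qed
  qed
qed

lemma sub_antisym: "s \<in> subtrees t \<Longrightarrow> t \<in> subtrees s \<Longrightarrow> s = t"
proof (induction t arbitrary: s)
  case (Leaf n) then show ?case by auto
next
  case (Node cs)
  show ?case
  proof (rule ccontr)
    assume "s \<noteq> Node cs"
    then obtain c where "c \<in> set cs" "s \<in> subtrees c" using Node.prems by auto
    then have "size s < size (Node cs)" using sub_size child_size by fastforce
    moreover have "size (Node cs) \<le> size s" using sub_size Node.prems by blast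
    ultimately show False by simp
  qed
qed

lemma parent_uniq: "distinct (labels t) \<Longrightarrow> Node cs1 \<in> subtrees t \<Longrightarrow> Node cs2 \<in> subtrees t
   \<Longrightarrow> c \<in> set cs1 \<Longrightarrow> c \<in> set cs2 \<Longrightarrow> cs1 = cs2"
proof (induction t arbitrary: cs1 cs2)
  case (Leaf n) then show ?case by auto
next
  case (Node cs)
  have d: "distinct (concat (map labels cs))"
    using Node.prems(1) by auto
  have key: "cs' = cs" if kA: "Node cs' \<in> subtrees (Node cs)" and kB: "c \<in> set cs'" and kC: "c \<in> set cs" for cs'
  proof (rule ccontr)
    assume ne: "cs' \<noteq> cs"
    then obtain c' where c': "c' \<in> set cs" "Node cs' \<in> subtrees c'" using kA ne by auto
    have cin: "c \<in> subtrees c'" using child_sub[OF kB c'(2)] .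
    show False
    proof (cases "c = c'")
      case True
      then have "size (Node cs') \<le> size c" using sub_size c' by blast
      then show False using child_size[OF kB] by simp
    next
      case False
      then show False using disj[OF d kC c'(1)] lab_in_labels[OF cin] lab_hd[of c] by auto
    qed
  qed
  show ?case
  proof (cases "cs1 = cs \<or> cs2 = cs")
    case True
    then show ?thesis using key Node.prems by metis
  next
    case False
    then obtain c1 c2 where c1: "c1 \<in> set cs" "Node cs1 \<in> subtrees c1"
      and c2: "c2 \<in> set cs" "Node cs2 \<in> subtrees c2" using Node.prems by auto
    show ?thesis
    proof (cases "c1 = c2")
      case True
      then show ?thesis using Node.IH[OF c1(1) _ c1(2)] c2 d Node.prems(4,5)
        by (auto simp: distinct_concat_iff)
    next
      case False
      have "c \<in> subtrees c1" using child_sub[OF Node.prems(4) c1(2)] .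
      moreover have "c \<in> subtrees c2" using child_sub[OF Node.prems(5) c2(2)] .
      ultimately show ?thesis using disj[OF d c1(1) c2(1) False] lab_in_labels by blast
    qed
  qed
qed


fun hasnode :: "nat set \<Rightarrow> mtree \<Rightarrow> bool" where
  "hasnode \<nu> (Leaf n) = False"
| "hasnode \<nu> (Node cs) = (lab (Node cs) = \<nu> \<or> (\<exists>c\<in>set cs. hasnode \<nu> c))"

fun outside :: "nat set \<Rightarrow> mtree \<Rightarrow> nat set set" where
  "outside \<nu> (Leaf n) = {{n}}"
| "outside \<nu> (Node cs) = (if lab (Node cs) = \<nu> then {} else
     insert (lab (Node cs)) (\<Union>c\<in>set cs. outside \<nu> c))"

lemma lemG: "(\<forall>s\<in>subtrees t. lab s = \<nu> \<longrightarrow> s = Node cs0) \<Longrightarrow>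
  tens R W t j idx = tens_rep R W \<nu> (\<lambda>j idx. tens R W (Node cs0) j idx) t j idx"
proof (induction t arbitrary: j)
  case (Leaf n) then show ?case by simp
next
  case (Node cs)
  show ?case
  proof (cases "lab (Node cs) = \<nu>")
    case True
    then have "Node cs = Node cs0" using Node.prems sub_refl by blast
    then show ?thesis using True by simp
  next
    case False
    have "\<And>c r'. c \<in> set cs \<Longrightarrow> tens R W c r' idx = tens_rep R W \<nu> (\<lambda>j idx. tens R W (Node cs0) j idx) c r' idx"
      using Node by auto
    then show ?thesis using False
      by (simp del: lab.simps add: cong: map_cong) 
  qed
qed

lemma lemV: "(\<forall>\<mu>\<in>outside \<nu> t. W1 \<mu> = W2 \<mu>) \<Longrightarrow>
  tens_rep R W1 \<nu> g t j idx = tens_rep R W2 \<nu> g t j idx"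
proof (induction t arbitrary: j)
  case (Leaf n) then show ?case by simp
next
  case (Node cs)
  show ?case
  proof (cases "lab (Node cs) = \<nu>")
    case True
    then show ?thesis by (simp del: lab.simps)
  next
    case False
    have "\<And>c r'. c \<in> set cs \<Longrightarrow> tens_rep R W1 \<nu> g c r' idx = tens_rep R W2 \<nu> g c r' idx"
      using Node False by (auto simp del: lab.simps)
    moreover have "W1 (lab (Node cs)) = W2 (lab (Node cs))" using Node.prems False by (simp del: lab.simps)
    ultimately show ?thesis using False
      by (simp del: lab.simps cong: map_cong) 
  qed
qed

lemma lemU: "(\<forall>s\<in>subtrees t. W1 (lab s) = W2 (lab s)) \<Longrightarrow> tens R W1 t j idx = tens R W2 t j idx"
proof (induction t arbitrary: j)
  case (Leaf n) then show ?case by simp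
next
  case (Node cs)
  have "\<And>c r'. c \<in> set cs \<Longrightarrow> tens R W1 c r' idx = tens R W2 c r' idx"
  proof -
    fix c r' assume c: "c \<in> set cs"
    then have "\<forall>s\<in>subtrees c. W1 (lab s) = W2 (lab s)" using Node.prems by (auto simp del: lab.simps)
    then show "tens R W1 c r' idx = tens R W2 c r' idx" using Node.IH[OF c] by blast
  qed
  moreover have "W1 (lab (Node cs)) = W2 (lab (Node cs))" using Node.prems sub_refl by blast
  ultimately show ?case by (simp del: lab.simps cong: map_cong) 
qed

lemma outside_nu: "\<nu> \<in> outside \<nu> t \<Longrightarrow> \<exists>n. Leaf n \<in> subtrees t \<and> {n} = \<nu>"
  by (induction t) (auto simp del: lab.simps split: if_splits)

lemma lemO: "distinct (labels t) \<Longrightarrow> \<mu> \<in> outside \<nu> t \<Longrightarrow>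
  \<exists>s\<in>subtrees t. lab s = \<mu> \<and> (\<forall>q\<in>subtrees t. lab q = \<nu> \<longrightarrow> s \<in> subtrees q \<longrightarrow> q = s)"
proof (induction t)
  case (Leaf n) then show ?case by auto
next
  case (Node cs)
  have d: "distinct (concat (map labels cs))" using Node.prems(1) by auto
  have ne: "lab (Node cs) \<noteq> \<nu>" using Node.prems(2) by (auto simp del: lab.simps split: if_splits)
  show ?case
  proof (cases "\<mu> = lab (Node cs)")
    case True
    show ?thesis using True sub_refl sub_antisym by blast
  next
    case False
    then obtain c where c: "c \<in> set cs" "\<mu> \<in> outside \<nu> c" using Node.prems(2) ne
      by (auto simp del: lab.simps split: if_splits)
    have dc: "distinct (labels c)" using d c(1) by (auto simp: distinct_concat_iff)
    obtain s where s: "s \<in> subtrees c" "lab s = \<mu>" "\<forall>q\<in>subtrees c. lab q = \<nu> \<longrightarrow> s \<in> subtrees q \<longrightarrow> q = s"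
      using Node.IH[OF c(1) dc c(2)] by blast
    have qq: "q = s" if q: "q \<in> subtrees (Node cs)" "lab q = \<nu>" "s \<in> subtrees q" for q
    proof -
      have "q \<noteq> Node cs" using ne q by blast
      then obtain c' where c': "c' \<in> set cs" "q \<in> subtrees c'" using q(1) by auto
      have "c' = c"
      proof (rule ccontr)
        assume "c' \<noteq> c"
        moreover have "s \<in> subtrees c'" using sub_trans[OF c'(2) q(3)] .
        ultimately show False using disj[OF d c'(1) c(1)] lab_in_labels s(1) by blast
      qed
      then show ?thesis using s(3) c' q by blast
    qed
    have "s \<in> subtrees (Node cs)" using s(1) c(1) by auto
    then show ?thesis using s(2) qq by blast
  qed
qed

lemma hasnode_labels: "hasnode \<nu> c \<Longrightarrow> \<nu> \<in> set (labels c)"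
  by (induction c) (auto simp del: lab.simps)

lemma hasnode_sub: "Node cs \<in> subtrees t \<Longrightarrow> hasnode (lab (Node cs)) t"
  by (induction t) (auto simp del: lab.simps)

lemma gcong: "(\<forall>j. g1 j idx = g2 j idx) \<Longrightarrow> tens_rep R W \<nu> g1 t j idx = tens_rep R W \<nu> g2 t j idx"
proof (induction t arbitrary: j)
  case (Leaf n) then show ?case by simp
next
  case (Node cs)
  then show ?case by (simp del: lab.simps cong: map_cong)
qed

lemma PL: "distinct (concat (map labels cs)) \<Longrightarrow>
  (\<forall>c\<in>set cs. f c = (if hasnode \<nu> c then k * h c else h c)) \<Longrightarrow>
  prod_list (map f cs) = (if \<exists>c\<in>set cs. hasnode \<nu> c then k * prod_list (map h cs) else prod_list (map h cs))"
  for k :: real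
proof (induction cs)
  case Nil then show ?case by simp
next
  case (Cons a cs)
  have d: "distinct (concat (map labels cs))" using Cons.prems(1) by simp
  have IH: "prod_list (map f cs) = (if \<exists>c\<in>set cs. hasnode \<nu> c then k * prod_list (map h cs) else prod_list (map h cs))"
    using Cons d by simp
  show ?case
  proof (cases "hasnode \<nu> a")
    case True
    have "\<not> hasnode \<nu> c" if "c \<in> set cs" for c
    proof
      assume "hasnode \<nu> c"
      then have "\<nu> \<in> set (labels c)" by (rule hasnode_labels)
      moreover have "\<nu> \<in> set (labels a)" using True by (rule hasnode_labels)
      ultimately show False using Cons.prems(1) that by auto
    qed
    then show ?thesis using IH True Cons.prems(2) by (auto simp: algebra_simps)
  next
    case False
    then show ?thesis using IH Cons.prems(2) by (auto simp: algebra_simps)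
  qed
qed

lemma lemS: "distinct (labels t) \<Longrightarrow>
  tens_rep R W \<nu> (\<lambda>j idx. k * g j idx) t j idx =
  (if hasnode \<nu> t then k * tens_rep R W \<nu> g t j idx else tens_rep R W \<nu> g t j idx)"
proof (induction t arbitrary: j)
  case (Leaf n) then show ?case by simp
next
  case (Node cs)
  have d: "distinct (concat (map labels cs))" using Node.prems(1) by auto
  show ?case
  proof (cases "lab (Node cs) = \<nu>")
    case True
    then show ?thesis by (simp del: lab.simps)
  next
    case False
    have IH: "\<forall>c\<in>set cs. tens_rep R W \<nu> (\<lambda>j idx. k * g j idx) c r' idx =
       (if hasnode \<nu> c then k * tens_rep R W \<nu> g c r' idx else tens_rep R W \<nu> g c r' idx)" for r'
      using Node.IH d by (auto simp: distinct_concat_iff)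
    have P: "prod_list (map (\<lambda>c. tens_rep R W \<nu> (\<lambda>j idx. k * g j idx) c r' idx) cs) =
      (if \<exists>c\<in>set cs. hasnode \<nu> c then k * prod_list (map (\<lambda>c. tens_rep R W \<nu> g c r' idx) cs)
       else prod_list (map (\<lambda>c. tens_rep R W \<nu> g c r' idx) cs))" for r'
      by (rule PL[OF d IH])
    show ?thesis using False
      by (simp del: lab.simps add: P sum_distrib_left algebra_simps)
  qed
qed

lemma lemZ: "(\<forall>s\<in>subtrees t. \<forall>cs. s = Node cs \<longrightarrow> (\<exists>c\<in>set cs. lab c = \<nu> \<and> hasnode \<nu> c)
     \<longrightarrow> (\<forall>j<R (lab s). g j idx = 0)) \<Longrightarrow> lab t \<noteq> \<nu> \<Longrightarrow> hasnode \<nu> t \<Longrightarrow>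
   tens_rep R W \<nu> g t j idx = 0"
proof (induction t arbitrary: j)
  case (Leaf n) then show ?case by simp
next
  case (Node cs)
  obtain c where c: "c \<in> set cs" "hasnode \<nu> c" using Node.prems(2,3) by (auto simp del: lab.simps)
  have "tens_rep R W \<nu> g c r' idx = 0" if "r' < R (lab (Node cs))" for r'
  proof (cases "lab c = \<nu>")
    case True
    then obtain ds where "c = Node ds" using c(2) by (cases c) auto
    then show ?thesis using True Node.prems(1) c that sub_refl by (auto simp del: lab.simps)
  next
    case False
    then show ?thesis using Node.IH[OF c(1)] Node.prems(1) c by (auto simp del: lab.simps)
  qed
  then have "prod_list (map (\<lambda>c. tens_rep R W \<nu> g c r' idx) cs) = 0" if "r' < R (lab (Node cs))" for r'
    using c(1) that by (force simp: prod_list_zero_iff)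
  then show ?case using Node.prems(2) by (simp del: lab.simps)
qed


lemma leaf_in: "Leaf n \<in> subtrees t \<Longrightarrow> n \<in> set (leaves t)"
  by (induction t) auto

lemma not_self_child: "c \<in> set cs \<Longrightarrow> Node cs \<notin> subtrees c"
  using sub_size child_size by fastforce

theorem lemma12:
  fixes N :: nat and D :: "nat \<Rightarrow> nat" and T :: mtree
    and R :: "nat set \<Rightarrow> nat" and W :: "nat set \<Rightarrow> nat \<Rightarrow> nat \<Rightarrow> real"
    and \<nu> \<nu>c :: "nat set" and r :: nat
  assumes "mode_tree N T"
    and "\<forall>n\<in>{1..N}. D n > 0"
    and "\<forall>\<mu>\<in>interior T. R \<mu> > 0"
    and "\<nu> \<in> interior T"
    and "\<nu>c \<in> lab ` set (kids T \<nu>)"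
    and "r < R \<nu>"
  shows "(\<forall>idx. (\<forall>n\<in>{1..N}. idx n < D n) \<longrightarrow>
            end_tensor T R (W(\<nu> := (\<lambda>i j. if i = r then W \<nu> i j else 0))) idx
              = sigma T D R W \<nu> r * local_comp T D R W \<nu> r idx)
       \<and> (\<forall>idx. (\<forall>n\<in>{1..N}. idx n < D n) \<longrightarrow>
            end_tensor T R (W(\<nu>c := (\<lambda>i j. if j = r then W \<nu>c i j else 0))) idx
              = sigma T D R W \<nu> r * local_comp T D R W \<nu> r idx)"
proof -
  have dT: "distinct (labels T)" and lvs: "set (leaves T) = {1..N}"
    using assms(1) unfolding mode_tree_def by auto
  obtain cs0 where n0: "Node cs0 \<in> subtrees T" and l0: "lab (Node cs0) = \<nu>"
    using assms(4) unfolding interior_def by blast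
  have H: "\<forall>s\<in>subtrees T. lab s = \<nu> \<longrightarrow> s = Node cs0"
    using uniq[OF dT _ n0] l0 by metis
  have kd: "kids T \<nu> = cs0"
    unfolding kids_def
  proof (rule the_equality)
    show "Node cs0 \<in> subtrees T \<and> lab (Node cs0) = \<nu>" using n0 l0 by blast
  next
    fix cs assume "Node cs \<in> subtrees T \<and> lab (Node cs) = \<nu>"
    then show "cs = cs0" using H by blast
  qed
  have d0: "distinct (labels (Node cs0))" using distinct_sub[OF dT n0] .
  have dcs: "distinct (concat (map labels cs0))" using d0 by simp
  have csT: "c \<in> subtrees T" if "c \<in> set cs0" for c using child_sub[OF that n0] .
  define G0 where "G0 = (\<lambda>j idx. W \<nu> r j * prod_list (map (\<lambda>c. tens R W c r idx) cs0))"
  have hasT: "hasnode \<nu> T" using hasnode_sub[OF n0] l0 by simp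
  \<comment> \<open>children of nu unaffected by modifications at nu\<close>
  have nochild: "\<forall>s\<in>subtrees c. lab s \<noteq> \<nu>" if "c \<in> set cs0" for c
  proof
    fix s assume s: "s \<in> subtrees c"
    show "lab s \<noteq> \<nu>"
    proof
      assume "lab s = \<nu>"
      then have "s = Node cs0" using H sub_trans[OF csT[OF that] s] by blast
      then show False using s not_self_child[OF that] by simp
    qed
  qed
  have final: "tens_rep R W \<nu> G0 T 0 idx = sigma T D R W \<nu> r * local_comp T D R W \<nu> r idx"
    if idx: "\<forall>n\<in>{1..N}. idx n < D n" for idx
  proof (cases "sigma T D R W \<nu> r = 0")
    case False
    let ?s = "sigma T D R W \<nu> r"
    have "local_comp T D R W \<nu> r idx = tens_rep R W \<nu> (\<lambda>j idx. (1 / ?s) * G0 j idx) T 0 idx"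
      unfolding local_comp_def using False kd by (simp add: G0_def mult.assoc)
    also have "\<dots> = (1 / ?s) * tens_rep R W \<nu> G0 T 0 idx"
      using lemS[OF dT, of R W \<nu> "1 / ?s" G0 0 idx] by (simp only: hasT if_True)
    finally show ?thesis using False by simp
  next
    case True
    have "tens_rep R W \<nu> G0 T 0 idx = 0"
    proof -
      have "sqrt (\<Sum>r'<parent_rank R T \<nu>. (W \<nu> r r')\<^sup>2) = 0 \<or>
            prod_list (map (\<lambda>c. sqrt (\<Sum>i<rank D R c. (W (lab c) i r)\<^sup>2)) cs0) = 0"
        using True kd unfolding sigma_def by simp
      then show ?thesis
      proof
        assume "sqrt (\<Sum>r'<parent_rank R T \<nu>. (W \<nu> r r')\<^sup>2) = 0"
        then have "(\<Sum>r'<parent_rank R T \<nu>. (W \<nu> r r')\<^sup>2) = 0" by simp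
        then have row: "\<forall>r'<parent_rank R T \<nu>. W \<nu> r r' = 0"
          by (simp add: sum_nonneg_eq_0_iff)
        show ?thesis
        proof (cases "\<nu> = lab T")
          case True
          then have "T = Node cs0" using H sub_refl by blast
          moreover have "W \<nu> r 0 = 0" using row True unfolding parent_rank_def by simp
          ultimately show ?thesis using l0 by (simp del: lab.simps add: G0_def)
        next
          case False
          have "\<forall>j<R (lab s). G0 j idx = 0"
            if s: "s \<in> subtrees T" "s = Node cs" "c \<in> set cs" "lab c = \<nu>" for s cs c
          proof -
            have cT: "c \<in> subtrees T" using child_sub[OF s(3)] s by blast
            have pr: "parent_rank R T \<nu> = R (lab (Node cs))"
              unfolding parent_rank_def using False
            proof (simp del: lab.simps, intro arg_cong[where f = "\<lambda>p. R (lab p)"] the_equality)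
              show "Node cs \<in> subtrees T \<and> (\<exists>cs'. Node cs = Node cs' \<and> (\<exists>c\<in>set cs'. lab c = \<nu>))"
                using s by blast
            next
              fix p assume p: "p \<in> subtrees T \<and> (\<exists>cs'. p = Node cs' \<and> (\<exists>c\<in>set cs'. lab c = \<nu>))"
              then obtain cs' c' where p': "p = Node cs'" "c' \<in> set cs'" "lab c' = \<nu>" by blast
              have "c' \<in> subtrees T" using child_sub[OF p'(2)] p p' by blast
              then have "c' = c" using uniq[OF dT _ cT] p' s by metis
              then show "p = Node cs" using parent_uniq[OF dT _ _ p'(2)] p p' s by blast
            qed
            show ?thesis using row pr s by (simp del: lab.simps add: G0_def)
          qed
          then show ?thesis using lemZ[of T \<nu> R G0 idx W 0] False hasT by blast
        qed
      next
        assume "prod_list (map (\<lambda>c. sqrt (\<Sum>i<rank D R c. (W (lab c) i r)\<^sup>2)) cs0) = 0"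
        then obtain c where c: "c \<in> set cs0" "sqrt (\<Sum>i<rank D R c. (W (lab c) i r)\<^sup>2) = 0"
          by (auto simp: prod_list_zero_iff)
        then have "(\<Sum>i<rank D R c. (W (lab c) i r)\<^sup>2) = 0" by simp
        then have col: "\<forall>i<rank D R c. W (lab c) i r = 0"
          by (simp add: sum_nonneg_eq_0_iff)
        have "tens R W c r idx = 0"
        proof (cases c)
          case (Leaf n)
          then have "n \<in> {1..N}" using leaf_in csT[OF c(1)] lvs by blast
          then show ?thesis using Leaf col idx by simp
        next
          case (Node ds)
          then show ?thesis using col by (simp del: lab.simps)
        qed
        then have G: "\<forall>j. G0 j idx = 0 * G0 j idx" using c(1) unfolding G0_def
          by (force simp: prod_list_zero_iff)
        have "tens_rep R W \<nu> G0 T 0 idx = tens_rep R W \<nu> (\<lambda>j idx. 0 * G0 j idx) T 0 idx"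
          by (rule gcong) (use G in blast)
        also have "\<dots> = 0" using lemS[OF dT, of R W \<nu> 0 G0 0 idx] by (simp only: hasT if_True mult_zero_left)
        finally show ?thesis .
      qed
    qed
    then show ?thesis using True by simp
  qed
  show ?thesis
  proof (intro conjI allI impI)
    fix idx :: "nat \<Rightarrow> nat" assume idx: "\<forall>n\<in>{1..N}. idx n < D n"
    define W' where "W' = W(\<nu> := (\<lambda>i j. if i = r then W \<nu> i j else 0))"
    have "end_tensor T R W' idx = tens_rep R W' \<nu> (\<lambda>j idx. tens R W' (Node cs0) j idx) T 0 idx"
      unfolding end_tensor_def using lemG[OF H] by blast
    also have "\<dots> = tens_rep R W \<nu> (\<lambda>j idx. tens R W' (Node cs0) j idx) T 0 idx"
    proof (rule lemV, intro ballI)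
      fix \<mu> assume m: "\<mu> \<in> outside \<nu> T"
      have "\<mu> \<noteq> \<nu>"
      proof
        assume "\<mu> = \<nu>"
        then obtain n where "Leaf n \<in> subtrees T" "{n} = \<nu>" using outside_nu m by blast
        then show False using H by auto
      qed
      then show "W' \<mu> = W \<mu>" unfolding W'_def by simp
    qed
    also have "\<dots> = tens_rep R W \<nu> G0 T 0 idx"
    proof (rule gcong, intro allI)
      fix j
      have ch: "tens R W' c r' idx = tens R W c r' idx" if "c \<in> set cs0" for c r'
        using lemU[of c W' W] nochild[OF that] unfolding W'_def by simp
      have "tens R W' (Node cs0) j idx =
         (\<Sum>r'<R \<nu>. W' \<nu> r' j * prod_list (map (\<lambda>c. tens R W c r' idx) cs0))"
        using l0 ch by (simp del: lab.simps cong: map_cong)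
      also have "\<dots> = (\<Sum>r'<R \<nu>. if r' = r then W \<nu> r j * prod_list (map (\<lambda>c. tens R W c r idx) cs0) else 0)"
        by (rule sum.cong) (auto simp: W'_def)
      also have "\<dots> = G0 j idx" using assms(6) by (simp add: G0_def)
      finally show "tens R W' (Node cs0) j idx = G0 j idx" .
    qed
    also have "\<dots> = sigma T D R W \<nu> r * local_comp T D R W \<nu> r idx" using final[OF idx] .
    finally show "end_tensor T R (W(\<nu> := (\<lambda>i j. if i = r then W \<nu> i j else 0))) idx
              = sigma T D R W \<nu> r * local_comp T D R W \<nu> r idx" unfolding W'_def .
  next
    fix idx :: "nat \<Rightarrow> nat" assume idx: "\<forall>n\<in>{1..N}. idx n < D n"
    obtain c0 where c0: "c0 \<in> set cs0" "lab c0 = \<nu>c" using assms(5) kd by auto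
    have c0T: "c0 \<in> subtrees T" using csT[OF c0(1)] .
    have nn: "\<nu>c \<noteq> \<nu>" using nochild[OF c0(1)] sub_refl c0(2) by blast
    define W' where "W' = W(\<nu>c := (\<lambda>i j. if j = r then W \<nu>c i j else 0))"
    have "end_tensor T R W' idx = tens_rep R W' \<nu> (\<lambda>j idx. tens R W' (Node cs0) j idx) T 0 idx"
      unfolding end_tensor_def using lemG[OF H] by blast
    also have "\<dots> = tens_rep R W \<nu> (\<lambda>j idx. tens R W' (Node cs0) j idx) T 0 idx"
    proof (rule lemV, intro ballI)
      fix \<mu> assume m: "\<mu> \<in> outside \<nu> T"
      have "\<mu> \<noteq> \<nu>c"
      proof
        assume "\<mu> = \<nu>c"
        then obtain s where s: "s \<in> subtrees T" "lab s = \<nu>c"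
           "\<forall>q\<in>subtrees T. lab q = \<nu> \<longrightarrow> s \<in> subtrees q \<longrightarrow> q = s"
          using lemO[OF dT m] by blast
        have "s = c0" using uniq[OF dT s(1) c0T] s(2) c0(2) by simp
        moreover have "c0 \<in> subtrees (Node cs0)" using c0(1) sub_refl by auto
        ultimately have "Node cs0 = c0" using s(3) n0 l0 by blast
        then show False using not_self_child[OF c0(1)] sub_refl by metis
      qed
      then show "W' \<mu> = W \<mu>" unfolding W'_def by simp
    qed
    also have "\<dots> = tens_rep R W \<nu> G0 T 0 idx"
    proof (rule gcong, intro allI)
      fix j
      have ch: "tens R W' c r' idx = tens R W c r' idx" if "c \<in> set cs0" "c \<noteq> c0" for c r'
      proof -
        have "\<forall>s\<in>subtrees c. lab s \<noteq> \<nu>c"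
        proof
          fix s assume s: "s \<in> subtrees c"
          show "lab s \<noteq> \<nu>c"
          proof
            assume "lab s = \<nu>c"
            then have "s = c0" using uniq[OF dT _ c0T] sub_trans[OF csT[OF that(1)] s] c0(2) by metis
            then have "lab c0 \<in> set (labels c)" using lab_in_labels s by blast
            then show False using disj[OF dcs that(1) c0(1) that(2)] lab_hd[of c0] by blast
          qed
        qed
        then show ?thesis using lemU[of c W' W] unfolding W'_def by simp
      qed
      have ch0: "tens R W' c0 r' idx = (if r' = r then tens R W c0 r idx else 0)" for r'
      proof (cases c0)
        case (Leaf n)
        then show ?thesis using c0(2) unfolding W'_def by simp
      next
        case (Node ds)
        have "tens R W' d r'' idx = tens R W d r'' idx" if d: "d \<in> set ds" for d r''
        proof -
          have "\<forall>s\<in>subtrees d. lab s \<noteq> \<nu>c"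
          proof
            fix s assume s: "s \<in> subtrees d"
            show "lab s \<noteq> \<nu>c"
            proof
              assume "lab s = \<nu>c"
              then have "s = c0" using uniq[OF dT _ c0T] sub_trans[OF child_sub[OF d] s] c0T Node c0(2) by metis
              then show False using s not_self_child[OF d] Node by simp
            qed
          qed
          then show ?thesis using lemU[of d W' W] unfolding W'_def by simp
        qed
        then show ?thesis using Node c0(2) unfolding W'_def
          by (simp del: lab.simps cong: map_cong)
      qed
      have P: "prod_list (map (\<lambda>c. tens R W' c r' idx) cs0) =
           (if r' = r then prod_list (map (\<lambda>c. tens R W c r idx) cs0) else 0)" for r'
      proof (cases "r' = r")
        case True
        have eq: "map (\<lambda>c. tens R W' c r' idx) cs0 = map (\<lambda>c. tens R W c r idx) cs0"
        proof (intro map_cong refl)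
          fix c assume "c \<in> set cs0"
          then show "tens R W' c r' idx = tens R W c r idx"
            using ch[of c r'] ch0[of r'] True by (cases "c = c0") auto
        qed
        show ?thesis by (subst eq) (simp add: True)
      next
        case False
        have "tens R W' c0 r' idx = 0" using ch0[of r'] False by simp
        then have "0 \<in> set (map (\<lambda>c. tens R W' c r' idx) cs0)" using c0(1) by force
        then show ?thesis using False by (simp only: prod_list_zero_iff if_False)
      qed
      have "W' \<nu> = W \<nu>" unfolding W'_def using nn by simp
      then have "tens R W' (Node cs0) j idx =
         (\<Sum>r'<R \<nu>. W \<nu> r' j * (if r' = r then prod_list (map (\<lambda>c. tens R W c r idx) cs0) else 0))"
        using l0 P by (simp del: lab.simps)
      also have "\<dots> = G0 j idx" unfolding G0_def using assms(6)
        by (simp add: if_distrib cong: if_cong)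
      finally show "tens R W' (Node cs0) j idx = G0 j idx" .
    qed
    also have "\<dots> = sigma T D R W \<nu> r * local_comp T D R W \<nu> r idx" using final[OF idx] .
    finally show "end_tensor T R (W(\<nu>c := (\<lambda>i j. if j = r then W \<nu>c i j else 0))) idx
              = sigma T D R W \<nu> r * local_comp T D R W \<nu> r idx" unfolding W'_def .
  qed
qed

end
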